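(* Let $T\in\mathbb{R}$, let $v\ge2$ be an integer or $v=\infty$, and for each integer $2\le j<v+1$ let $S_j:\Delta_j\to\mathbb{R}$ be a continuous function, such that the family satisfies the coherence axiom: whenever $2\le m<n<v+1$, $1\le i_1<\cdots<i_m\le n$ and $p\in\Delta_n$ has $p_j=0$ for all $j\notin\{i_1,\ldots,i_m\}$, then $S_n(p_1,\ldots,p_n)=S_m(p_{i_1},\ldots,p_{i_m})$. Let $\mathbf{T}$ be an $(n,v)$-tree with $n\ge 2$. Then for all $x_1,\ldots,x_n\in\mathbb{R}$, $$(x_1\oplus_S\cdots\oplus_S x_n)_{\mathbf{T}}=\min_{p\in\Delta_n}\Big(\sum_{i=1}^np_ix_i-T\,S_{\mathbf{T}}(p_1,\ldots,p_n)\Big).$$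
   Context: $\Delta_k=\{p\in[0,\infty)^k:\sum_ip_i=1\}$. An $(n,v)$-tree is a finite rooted tree in which every vertex is either a leaf or has between $2$ and $v$ children, ordered from left to right, and whose $n$ leaves are labelled bijectively by $\{1,\ldots,n\}$. For $2\le m<v+1$ and $y_1,\ldots,y_m\in\mathbb{R}$ define the $m$-ary operation $\bigoplus_m(y_1,\ldots,y_m)=\min_{q\in\Delta_m}\big(\sum_jq_jy_j-T\,S_m(q)\big)$. For a tree (or subtree, whose leaves carry a label set) define recursively: a single leaf labelled $i$ has value $x_i$ and entropy $0$; if the root has subtrees $\mathbf{A}_1,\ldots,\mathbf{A}_m$ (left to right) with label sets $L_1,\ldots,L_m$, the value is $(x_1\oplus_S\cdots\oplus_Sx_n)_{\mathbf{T}}=\bigoplus_m(\text{value of }\mathbf{A}_1,\ldots,\text{value of }\mathbf{A}_m)$ and, for a probability vector $p$ indexed by the labels, with $P_j=\sum_{i\in L_j}p_i$, $$S_{\mathbf{T}}(p)=S_m(P_1,\ldots,P_m)+\sum_{j=1}^mP_j\,S_{\mathbf{A}_j}\big((p_i/P_j)_{i\in L_j}\big),$$ where a term with $P_j=0$ is taken to be $0$. *)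

theory Defs
  imports "HOL-Analysis.Analysis" "HOL-Library.Extended_Nat"
begin

text \<open>Probability prob_simplex Delta_k, realised inside nat => real (product topology):
  coordinates 0..<k, all other coordinates are 0.\<close>
definition prob_simplex :: "nat \<Rightarrow> (nat \<Rightarrow> real) set" where
  "prob_simplex k = {p. (\<forall>i. 0 \<le> p i) \<and> (\<forall>i\<ge>k. p i = 0) \<and> (\<Sum>i<k. p i) = 1}"

definition padvec :: "real list \<Rightarrow> nat \<Rightarrow> real" where
  "padvec ys = (\<lambda>k. if k < length ys then ys ! k else 0)"

definition coherent :: "enat \<Rightarrow> (nat \<Rightarrow> (nat \<Rightarrow> real) \<Rightarrow> real) \<Rightarrow> bool" where
  "coherent v S \<longleftrightarrow>
     (\<forall>m n \<sigma> p. 2 \<le> m \<and> m < n \<and> enat n \<le> v \<and>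
        strict_mono_on {..<m} \<sigma> \<and> (\<forall>k<m. \<sigma> k < n) \<and>
        p \<in> prob_simplex n \<and> (\<forall>j<n. j \<notin> \<sigma> ` {..<m} \<longrightarrow> p j = 0)
        \<longrightarrow> S n p = S m (\<lambda>k. if k < m then p (\<sigma> k) else 0))"

text \<open>The m-ary operation: minimum over the prob_simplex (taken as Inf; it is attained).\<close>
definition oplusm :: "real \<Rightarrow> (nat \<Rightarrow> (nat \<Rightarrow> real) \<Rightarrow> real) \<Rightarrow> real list \<Rightarrow> real" where
  "oplusm T S ys = Inf ((\<lambda>q. (\<Sum>j<length ys. q j * ys ! j) - T * S (length ys) q)
                          ` prob_simplex (length ys))"

datatype ltree = Leaf nat | Node "ltree list"

fun leaves :: "ltree \<Rightarrow> nat list" where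
  "leaves (Leaf i) = [i]"
| "leaves (Node ts) = concat (map leaves ts)"

fun arity_ok :: "enat \<Rightarrow> ltree \<Rightarrow> bool" where
  "arity_ok v (Leaf i) = True"
| "arity_ok v (Node ts) = (2 \<le> length ts \<and> enat (length ts) \<le> v \<and> (\<forall>t\<in>set ts. arity_ok v t))"

text \<open>(n,v)-tree; leaves labelled bijectively by {0..<n} (0-based labels).\<close>
definition nv_tree :: "nat \<Rightarrow> enat \<Rightarrow> ltree \<Rightarrow> bool" where
  "nv_tree n v t \<longleftrightarrow> arity_ok v t \<and> distinct (leaves t) \<and> set (leaves t) = {0..<n}"

fun tree_val :: "real \<Rightarrow> (nat \<Rightarrow> (nat \<Rightarrow> real) \<Rightarrow> real) \<Rightarrow> (nat \<Rightarrow> real) \<Rightarrow> ltree \<Rightarrow> real" where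
  "tree_val T S x (Leaf i) = x i"
| "tree_val T S x (Node ts) = oplusm T S (map (tree_val T S x) ts)"

definition mass :: "(nat \<Rightarrow> real) \<Rightarrow> ltree \<Rightarrow> real" where
  "mass p t = (\<Sum>i\<in>set (leaves t). p i)"

fun tree_entropy :: "(nat \<Rightarrow> (nat \<Rightarrow> real) \<Rightarrow> real) \<Rightarrow> ltree \<Rightarrow> (nat \<Rightarrow> real) \<Rightarrow> real" where
  "tree_entropy S (Leaf i) p = 0"
| "tree_entropy S (Node ts) p =
     S (length ts) (padvec (map (mass p) ts)) +
     sum_list (map (\<lambda>t. if mass p t = 0 then 0
                         else mass p t * tree_entropy S t (\<lambda>i. p i / mass p t)) ts)"

end

theory Submission
  imports Defs
begin

lemma compact_simplex: "compact (prob_simplex m)"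
proof -
  have K: "compact (PiE UNIV (\<lambda>_::nat. {0..1::real}))"
    using compactin_PiE[of "\<lambda>_. euclidean" UNIV "\<lambda>_::nat. {0..1::real}"]
    by (simp add: euclidean_product_topology)
  have c: "closed (prob_simplex m)"
    unfolding prob_simplex_def
    by (intro closed_Collect_conj closed_Collect_all closed_Collect_imp closed_Collect_le closed_Collect_eq continuous_intros) auto
  have "prob_simplex m \<subseteq> PiE UNIV (\<lambda>_::nat. {0..1::real})"
  proof
    fix p assume p: "p \<in> prob_simplex m"
    have "p i \<le> 1" for i
    proof (cases "i < m")
      case True
      have "p i \<le> (\<Sum>j<m. p j)" using p True
        by (intro member_le_sum) (auto simp: prob_simplex_def)
      then show ?thesis using p by (simp add: prob_simplex_def)
    next
      case False then show ?thesis using p by (simp add: prob_simplex_def)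
    qed
    then show "p \<in> PiE UNIV (\<lambda>_::nat. {0..1::real})" using p by (auto simp: prob_simplex_def)
  qed
  then show ?thesis using K c compact_Int_closed[OF K c] by (simp add: Int_absorb1)
qed

lemma oplusm_min:
  assumes "1 \<le> length ys" "continuous_on (prob_simplex (length ys)) (S (length ys))"
  shows "\<exists>q\<in>prob_simplex (length ys). oplusm T S ys = (\<Sum>j<length ys. q j * ys ! j) - T * S (length ys) q"
    and "\<forall>q\<in>prob_simplex (length ys). oplusm T S ys \<le> (\<Sum>j<length ys. q j * ys ! j) - T * S (length ys) q"
proof -
  let ?m = "length ys"
  let ?g = "\<lambda>q. (\<Sum>j<?m. q j * ys ! j) - T * S ?m q"
  have ne: "prob_simplex ?m \<noteq> {}"
  proof -
    have "(\<lambda>i. if i = 0 then 1 else 0::real) \<in> prob_simplex ?m"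
      using assms(1) by (auto simp: prob_simplex_def)
    then show ?thesis by blast
  qed
  have cg: "continuous_on (prob_simplex ?m) ?g"
    by (intro continuous_intros assms(2) continuous_on_product_then_coordinatewise[OF continuous_on_id])
  obtain q where q: "q \<in> prob_simplex ?m" "\<forall>y\<in>prob_simplex ?m. ?g q \<le> ?g y"
    using continuous_attains_inf[OF compact_simplex ne cg] by blast
  have eq: "oplusm T S ys = ?g q"
    unfolding oplusm_def using q by (intro cInf_eq_minimum) auto
  show "\<exists>q\<in>prob_simplex ?m. oplusm T S ys = ?g q" using q eq by blast
  show "\<forall>q\<in>prob_simplex ?m. oplusm T S ys \<le> ?g q" using q eq by auto
qed

lemma agree:
  "(\<forall>i\<in>set (leaves t). p i = p' i) \<Longrightarrow> tree_entropy S t p = tree_entropy S t p'"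
proof (induction t arbitrary: p p')
  case (Leaf x)
  then show ?case by simp
next
  case (Node ts)
  have m: "mass p t' = mass p' t'" if "t' \<in> set ts" for t'
    unfolding mass_def using Node.prems that by (intro sum.cong) auto
  have A: "map (mass p) ts = map (mass p') ts" using m by simp
  have B: "map (\<lambda>t. if mass p t = 0 then 0 else mass p t * tree_entropy S t (\<lambda>i. p i / mass p t)) ts
     = map (\<lambda>t. if mass p' t = 0 then 0 else mass p' t * tree_entropy S t (\<lambda>i. p' i / mass p' t)) ts"
  proof (rule map_cong[OF refl])
    fix t' assume t': "t' \<in> set ts"
    have "tree_entropy S t' (\<lambda>i. p i / mass p t') = tree_entropy S t' (\<lambda>i. p' i / mass p' t')"
      using Node.IH[OF t'] Node.prems t' m[OF t'] by auto
    then show "(if mass p t' = 0 then 0 else mass p t' * tree_entropy S t' (\<lambda>i. p i / mass p t')) =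
          (if mass p' t' = 0 then 0 else mass p' t' * tree_entropy S t' (\<lambda>i. p' i / mass p' t'))"
      using m[OF t'] by simp
  qed
  show ?case by (simp only: tree_entropy.simps A B)
qed

lemma distinct_concat_disj:
  "distinct (concat (map f xs)) \<Longrightarrow> i < length xs \<Longrightarrow> k < length xs \<Longrightarrow> i \<noteq> k
   \<Longrightarrow> set (f (xs!i)) \<inter> set (f (xs!k)) = {}"
proof (induction xs arbitrary: i k)
  case Nil then show ?case by simp
next
  case (Cons a xs)
  show ?case
  proof (cases i)
    case 0
    then obtain k' where "k = Suc k'" using Cons by (cases k) auto
    then show ?thesis using Cons 0 nth_mem[of k' xs] by fastforce
  next
    case (Suc i')
    show ?thesis
    proof (cases k)
      case 0 then show ?thesis using Cons Suc nth_mem[of i' xs] by fastforce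
    next
      case (Suc k') then show ?thesis using Cons \<open>i = Suc i'\<close> by auto
    qed
  qed
qed

definition simpL :: "nat set \<Rightarrow> (nat \<Rightarrow> real) set" where
  "simpL L = {p. (\<forall>i\<in>L. 0 \<le> p i) \<and> sum p L = 1}"

lemma main:
  assumes cont: "\<And>j. 2 \<le> j \<Longrightarrow> enat j \<le> v \<Longrightarrow> continuous_on (prob_simplex j) (S j)"
  shows "arity_ok v t \<Longrightarrow> distinct (leaves t) \<Longrightarrow>
    (\<exists>p\<in>simpL (set (leaves t)). tree_val T S x t = (\<Sum>i\<in>set (leaves t). p i * x i) - T * tree_entropy S t p)
  \<and> (\<forall>p\<in>simpL (set (leaves t)). tree_val T S x t \<le> (\<Sum>i\<in>set (leaves t). p i * x i) - T * tree_entropy S t p)"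
proof (induction t)
  case (Leaf i)
  show ?case
  proof
    show "\<exists>p\<in>simpL (set (leaves (Leaf i))). tree_val T S x (Leaf i) = (\<Sum>i\<in>set (leaves (Leaf i)). p i * x i) - T * tree_entropy S (Leaf i) p"
      by (rule bexI[of _ "\<lambda>_. 1"]) (auto simp: simpL_def)
    show "\<forall>p\<in>simpL (set (leaves (Leaf i))). tree_val T S x (Leaf i) \<le> (\<Sum>i\<in>set (leaves (Leaf i)). p i * x i) - T * tree_entropy S (Leaf i) p"
      by (auto simp: simpL_def)
  qed
next
  case (Node ts)
  define m where "m = length ts"
  define L where "L = (\<lambda>j. set (leaves (ts ! j)))"
  define y where "y = (\<lambda>j. tree_val T S x (ts ! j))"
  define U where "U = set (leaves (Node ts))"
  have m2: "2 \<le> m" and mv: "enat m \<le> v" using Node.prems by (auto simp: m_def)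
  have contm: "continuous_on (prob_simplex m) (S m)" using cont m2 mv .
  have sts: "set ts = (\<lambda>j. ts!j) ` {..<m}" by (auto simp: m_def in_set_conv_nth)
  have U: "U = (\<Union>j<m. L j)"
    unfolding U_def L_def by (simp add: sts)
  have disj: "L j \<inter> L k = {}" if "j < m" "k < m" "j \<noteq> k" for j k
    unfolding L_def using distinct_concat_disj[of leaves ts j k] Node.prems that by (auto simp: m_def)
  have finL: "finite (L j)" for j unfolding L_def by simp
  have sumU: "sum f U = (\<Sum>j<m. sum f (L j))" for f :: "nat \<Rightarrow> real"
    unfolding U by (rule sum.UNION_disjoint) (use finL disj in auto)
  have IH: "(\<exists>p\<in>simpL (L j). y j = (\<Sum>i\<in>L j. p i * x i) - T * tree_entropy S (ts!j) p)
     \<and> (\<forall>p\<in>simpL (L j). y j \<le> (\<Sum>i\<in>L j. p i * x i) - T * tree_entropy S (ts!j) p)" if "j < m" for j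
  proof -
    have tj: "ts ! j \<in> set ts" using that by (simp add: m_def)
    have "arity_ok v (ts!j)" using Node.prems tj by auto
    moreover have "distinct (leaves (ts!j))" using Node.prems tj by (auto simp: distinct_concat_iff)
    ultimately show ?thesis using Node.IH[OF tj] unfolding L_def y_def by blast
  qed
  define ys where "ys = map (tree_val T S x) ts"
  have tv: "tree_val T S x (Node ts) = oplusm T S ys"
    unfolding ys_def by simp
  have ny: "ys ! j = y j" if "j < m" for j
    using that unfolding y_def m_def ys_def by simp
  have lys: "length ys = m" unfolding ys_def m_def by simp
  have om1: "\<exists>q\<in>prob_simplex m. oplusm T S ys = (\<Sum>j<m. q j * y j) - T * S m q"
    using oplusm_min(1)[of ys S T] lys m2 contm ny by simp
  have om2: "\<forall>q\<in>prob_simplex m. oplusm T S ys \<le> (\<Sum>j<m. q j * y j) - T * S m q"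
    using oplusm_min(2)[of ys S T] lys m2 contm ny by simp
  define H where "H = (\<lambda>p j. if mass p (ts!j) = 0 then 0 else mass p (ts!j) * tree_entropy S (ts!j) (\<lambda>i. p i / mass p (ts!j)))"
  have TE: "tree_entropy S (Node ts) p = S m (padvec (map (mass p) ts)) + (\<Sum>j<m. H p j)" for p
    unfolding H_def m_def by (simp add: sum_list_sum_nth atLeast0LessThan)
  have massL: "mass p (ts!j) = sum p (L j)" for p j unfolding mass_def L_def by simp
  have lower: "tree_val T S x (Node ts) \<le> (\<Sum>i\<in>U. p i * x i) - T * tree_entropy S (Node ts) p"
    if p: "p \<in> simpL U" for p
  proof -
    define Q where "Q = (\<lambda>j. sum p (L j))"
    define q where "q = padvec (map (mass p) ts)"
    have qQ: "q j = Q j" if "j < m" for j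
      using that unfolding q_def Q_def padvec_def by (simp add: m_def massL)
    have p0: "\<forall>i\<in>U. 0 \<le> p i" and p1: "sum p U = 1" using p by (auto simp: simpL_def)
    have LU: "L j \<subseteq> U" if "j < m" for j using that U by auto
    have Q0: "0 \<le> Q j" if "j < m" for j unfolding Q_def using p0 LU[OF that] by (intro sum_nonneg) auto
    have qs: "q \<in> prob_simplex m"
    proof -
      have "(\<Sum>i<m. q i) = (\<Sum>j<m. Q j)" using qQ by simp
      also have "\<dots> = 1" using sumU[of p] p1 by (simp add: Q_def)
      finally show ?thesis using Q0 qQ unfolding prob_simplex_def
        by (auto simp: q_def padvec_def m_def)
    qed
    have step: "Q j * y j \<le> (\<Sum>i\<in>L j. p i * x i) - T * H p j" if j: "j < m" for j
    proof (cases "Q j = 0")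
      case True
      have nn: "\<forall>i\<in>L j. 0 \<le> p i" using p0 LU[OF j] by blast
      have s0: "sum p (L j) = 0" using True by (simp add: Q_def)
      have z: "\<forall>i\<in>L j. p i = 0"
        using sum_nonneg_eq_0_iff[of "L j" p] finL nn s0 by blast
      have "(\<Sum>i\<in>L j. p i * x i) = 0" using z by simp
      moreover have "H p j = 0" unfolding H_def massL using s0 by simp
      ultimately show ?thesis using True by simp
    next
      case False
      then have Qp: "Q j > 0" using Q0[OF j] by simp
      have r: "(\<lambda>i. p i / Q j) \<in> simpL (L j)"
        using p0 LU[OF j] Qp False unfolding simpL_def by (auto simp: sum_divide_distrib[symmetric] Q_def)
      have "y j \<le> (\<Sum>i\<in>L j. p i / Q j * x i) - T * tree_entropy S (ts!j) (\<lambda>i. p i / Q j)"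
        using bspec[OF conjunct2[OF IH[OF j]] r] by simp
      then have "Q j * y j \<le> Q j * ((\<Sum>i\<in>L j. p i / Q j * x i) - T * tree_entropy S (ts!j) (\<lambda>i. p i / Q j))"
        using Qp by (simp add: mult_left_mono)
      also have "\<dots> = (\<Sum>i\<in>L j. p i * x i) - T * H p j"
      proof -
        have Qj: "sum p (L j) = Q j" by (simp add: Q_def)
        have hj: "H p j = Q j * tree_entropy S (ts!j) (\<lambda>i. p i / Q j)"
          unfolding H_def massL Qj using False by simp
        show ?thesis using Qp unfolding hj by (simp add: right_diff_distrib sum_distrib_left)
      qed
      finally show ?thesis .
    qed
    have "tree_val T S x (Node ts) \<le> (\<Sum>j<m. q j * y j) - T * S m q"
      using tv om2 qs by auto
    also have "\<dots> = (\<Sum>j<m. Q j * y j) - T * S m q" using qQ by simp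
    also have "\<dots> \<le> (\<Sum>j<m. (\<Sum>i\<in>L j. p i * x i) - T * H p j) - T * S m q"
      using step by (intro diff_right_mono sum_mono) auto
    also have "\<dots> = (\<Sum>i\<in>U. p i * x i) - T * tree_entropy S (Node ts) p"
    proof -
      have "(\<Sum>j<m. (\<Sum>i\<in>L j. p i * x i) - T * H p j) = (\<Sum>j<m. (\<Sum>i\<in>L j. p i * x i)) - T * (\<Sum>j<m. H p j)"
        by (simp add: sum_subtractf sum_distrib_left)
      then show ?thesis unfolding TE q_def[symmetric] sumU[of "\<lambda>i. p i * x i"] by (simp add: ring_distribs)
    qed
    finally show ?thesis .
  qed
  have upper: "\<exists>p\<in>simpL U. tree_val T S x (Node ts) = (\<Sum>i\<in>U. p i * x i) - T * tree_entropy S (Node ts) p"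
  proof -
    obtain q where qs: "q \<in> prob_simplex m" and qeq: "oplusm T S ys = (\<Sum>j<m. q j * y j) - T * S m q"
      using om1 by blast
    have "\<forall>j\<in>{..<m}. \<exists>r. r \<in> simpL (L j) \<and> y j = (\<Sum>i\<in>L j. r i * x i) - T * tree_entropy S (ts!j) r"
      using IH by blast
    then obtain r where r: "\<And>j. j < m \<Longrightarrow> r j \<in> simpL (L j)"
      and ry: "\<And>j. j < m \<Longrightarrow> y j = (\<Sum>i\<in>L j. r j i * x i) - T * tree_entropy S (ts!j) (r j)"
      by (metis lessThan_iff)
    define p where "p = (\<lambda>i. \<Sum>k<m. if i \<in> L k then q k * r k i else 0)"
    have pL: "p i = q j * r j i" if j: "j < m" and i: "i \<in> L j" for i j
    proof -
      have "p i = (\<Sum>k<m. if k = j then q j * r j i else 0)"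
        unfolding p_def using disj[OF _ j] i by (intro sum.cong) auto
      also have "\<dots> = q j * r j i" using j by (simp add: sum.delta)
      finally show ?thesis .
    qed
    have q0: "0 \<le> q k" for k using qs by (simp add: prob_simplex_def)
    have qz: "q k = 0" if "m \<le> k" for k using qs that by (simp add: prob_simplex_def)
    have qsum: "(\<Sum>k<m. q k) = 1" using qs by (simp add: prob_simplex_def)
    have rr: "\<forall>i\<in>L j. 0 \<le> r j i" "sum (r j) (L j) = 1" if "j < m" for j
      using r[OF that] by (auto simp: simpL_def)
    have mp: "sum p (L j) = q j" if j: "j < m" for j
    proof -
      have "sum p (L j) = (\<Sum>i\<in>L j. q j * r j i)" using pL[OF j] by simp
      also have "\<dots> = q j" using rr(2)[OF j] by (simp add: sum_distrib_left[symmetric])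
      finally show ?thesis .
    qed
    have pU: "p \<in> simpL U"
    proof -
      have "\<forall>i\<in>U. 0 \<le> p i" unfolding U using pL q0 rr(1) by auto
      moreover have "sum p U = 1" unfolding sumU using mp qsum by simp
      ultimately show ?thesis by (simp add: simpL_def)
    qed
    have qpad: "padvec (map (mass p) ts) = q"
      by (rule ext) (auto simp: padvec_def m_def[symmetric] massL mp qz)
    have stepj: "(\<Sum>i\<in>L j. p i * x i) - T * H p j = q j * y j" if j: "j < m" for j
    proof (cases "q j = 0")
      case True
      then show ?thesis using pL[OF j] by (simp add: H_def massL mp[OF j])
    next
      case False
      have ag: "tree_entropy S (ts!j) (\<lambda>i. p i / q j) = tree_entropy S (ts!j) (r j)"
        by (rule agree) (use pL[OF j] False in \<open>auto simp: L_def\<close>)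
      have "H p j = q j * tree_entropy S (ts!j) (r j)"
        unfolding H_def massL mp[OF j] ag using False by simp
      moreover have "(\<Sum>i\<in>L j. p i * x i) = q j * (\<Sum>i\<in>L j. r j i * x i)"
        using pL[OF j] by (simp add: sum_distrib_left mult.assoc)
      ultimately show ?thesis using ry[OF j] by (simp add: right_diff_distrib)
    qed
    have "(\<Sum>i\<in>U. p i * x i) - T * tree_entropy S (Node ts) p
        = (\<Sum>j<m. (\<Sum>i\<in>L j. p i * x i) - T * H p j) - T * S m q"
    proof -
      have "(\<Sum>j<m. (\<Sum>i\<in>L j. p i * x i) - T * H p j) = (\<Sum>j<m. (\<Sum>i\<in>L j. p i * x i)) - T * (\<Sum>j<m. H p j)"
        by (simp add: sum_subtractf sum_distrib_left)
      then show ?thesis unfolding TE qpad sumU[of "\<lambda>i. p i * x i"] by (simp add: ring_distribs)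
    qed
    also have "\<dots> = (\<Sum>j<m. q j * y j) - T * S m q" using stepj by simp
    also have "\<dots> = tree_val T S x (Node ts)" using tv qeq by simp
    finally show ?thesis using pU by metis
  qed
  show ?case using upper lower unfolding U_def by blast
qed

theorem theorem10p9:
  fixes T :: real and v :: enat and S :: "nat \<Rightarrow> (nat \<Rightarrow> real) \<Rightarrow> real"
    and n :: nat and t :: ltree and x :: "nat \<Rightarrow> real"
  assumes "v \<ge> 2"
    and "\<And>j. 2 \<le> j \<Longrightarrow> enat j \<le> v \<Longrightarrow> continuous_on (prob_simplex j) (S j)"
    and "coherent v S"
    and "nv_tree n v t" and "n \<ge> 2"
  shows "(\<exists>p\<in>prob_simplex n. tree_val T S x t = (\<Sum>i<n. p i * x i) - T * tree_entropy S t p)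
       \<and> (\<forall>p\<in>prob_simplex n. tree_val T S x t \<le> (\<Sum>i<n. p i * x i) - T * tree_entropy S t p)"
proof -
  have lv: "set (leaves t) = {..<n}" using assms(4) by (auto simp: nv_tree_def)
  have M: "(\<exists>p\<in>simpL {..<n}. tree_val T S x t = (\<Sum>i<n. p i * x i) - T * tree_entropy S t p)
       \<and> (\<forall>p\<in>simpL {..<n}. tree_val T S x t \<le> (\<Sum>i<n. p i * x i) - T * tree_entropy S t p)"
    using main[OF assms(2), where t=t and T=T and x=x] assms(4) lv by (auto simp: nv_tree_def)
  then obtain p where p: "p \<in> simpL {..<n}" and pe: "tree_val T S x t = (\<Sum>i<n. p i * x i) - T * tree_entropy S t p"
    by blast
  define p' where "p' = (\<lambda>i. if i < n then p i else 0)"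
  have p's: "p' \<in> prob_simplex n" using p by (auto simp: p'_def prob_simplex_def simpL_def)
  have "tree_entropy S t p' = tree_entropy S t p" by (rule agree) (auto simp: lv p'_def)
  moreover have "(\<Sum>i<n. p' i * x i) = (\<Sum>i<n. p i * x i)" by (simp add: p'_def)
  ultimately have E: "\<exists>p\<in>prob_simplex n. tree_val T S x t = (\<Sum>i<n. p i * x i) - T * tree_entropy S t p"
    using p's pe by metis
  have "prob_simplex n \<subseteq> simpL {..<n}" by (auto simp: prob_simplex_def simpL_def)
  then show ?thesis using E M by blast
qed

end
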